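(* Let $r\ge1$ and let $f:\mathbb{D}^r\times\mathbb{P}^1\to\mathbb{D}^r\times\mathbb{P}^1$, $(x,z)\mapsto(x,f_x(z))$, be a holomorphic family of maps of degree $d\geq2$ parametrized by the polydisk $\mathbb{D}^r\subset\mathbb{C}^r$, with a marked critical point $c:\mathbb{D}^r\to\mathbb{P}^1$. Assume that $c(0)$ is attracted to a parabolic fixed point at $z=0$ of $f_0$ (i.e. $f_0(0)=0$, $f_0'(0)$ is a root of unity, and $f_0^n(c(0))\to0$). Then for every constant $\rho>1$ there exists $\delta>0$ such that the functions $\alpha_n(x):=f^n_{x/\rho^n}(c(x/\rho^n))$ converge uniformly to $0$ on the polydisk $(\mathbb{D}_\delta)^r$ as $n\to\infty$.
   Context: $\mathbb{D}$ is the unit disk, $\mathbb{D}_\delta$ the disk of radius $\delta$ centered at $0$; $f^n_y$ denotes the $n$-th iterate of $f_y$. *)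

theory Defs
  imports "HOL-Analysis.Analysis"
begin

text \<open>The Riemann sphere P^1 is modelled as complex option: Some z is the finite point z,
  None is the point at infinity.\<close>

type_synonym sphere = "complex option"

definition inv_pt :: "sphere \<Rightarrow> sphere" where
  "inv_pt q = (case q of None \<Rightarrow> Some 0
                | Some z \<Rightarrow> (if z = 0 then None else Some (1 / z)))"

text \<open>Standard chart of P^1 adapted to the point p (identity if p is finite,
  w = 1/z if p = \<infinity>), and its inverse.\<close>
definition coord :: "sphere \<Rightarrow> sphere \<Rightarrow> complex" where
  "coord p q = (case (if p = None then inv_pt q else q) of None \<Rightarrow> 0 | Some w \<Rightarrow> w)"

definition uncoord :: "sphere \<Rightarrow> complex \<Rightarrow> sphere" where
  "uncoord p w = (if p = None then inv_pt (Some w) else Some w)"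

definition holo_on :: "(complex ^ 'r \<Rightarrow> complex) \<Rightarrow> (complex ^ 'r) set \<Rightarrow> bool" where
  "holo_on h S \<longleftrightarrow> (\<forall>x\<in>S. \<exists>D. (h has_derivative D) (at x) \<and> (\<forall>c v. D (c *s v) = c * D v))"

definition holo_sphere :: "(complex ^ 'r \<Rightarrow> sphere) \<Rightarrow> (complex ^ 'r) set \<Rightarrow> bool" where
  "holo_sphere g S \<longleftrightarrow>
     (\<forall>x\<in>S. \<exists>e>0. \<exists>h. holo_on h (ball x e) \<and>
        ((\<forall>y\<in>ball x e. g y = Some (h y)) \<or> (\<forall>y\<in>ball x e. g y = inv_pt (Some (h y)))))"

definition polydisk :: "real \<Rightarrow> (complex ^ 'r) set" where
  "polydisk \<delta> = {x. \<forall>i. norm (x $ i) < \<delta>}"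

definition hom :: "(nat \<Rightarrow> complex) \<Rightarrow> nat \<Rightarrow> complex \<Rightarrow> complex \<Rightarrow> complex" where
  "hom a d z w = (\<Sum>j\<le>d. a j * z ^ j * w ^ (d - j))"

definition proj_pt :: "complex \<Rightarrow> complex \<Rightarrow> sphere" where
  "proj_pt u v = (if v = 0 then None else Some (u / v))"

text \<open>The rational map [z:w] \<mapsto> [P(z,w) : Q(z,w)] on P^1.\<close>
definition rat_map :: "(nat \<Rightarrow> complex) \<Rightarrow> (nat \<Rightarrow> complex) \<Rightarrow> nat \<Rightarrow> sphere \<Rightarrow> sphere" where
  "rat_map a b d p = (case p of
       None \<Rightarrow> proj_pt (a d) (b d)
     | Some z \<Rightarrow> proj_pt (hom a d z 1) (hom b d z 1))"

text \<open>P, Q have no common zero in C^2 - {0}, i.e. [P:Q] is a rational map of degree exactly d.\<close>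
definition no_common_zero :: "(nat \<Rightarrow> complex) \<Rightarrow> (nat \<Rightarrow> complex) \<Rightarrow> nat \<Rightarrow> bool" where
  "no_common_zero a b d \<longleftrightarrow> (\<forall>z w. (z, w) \<noteq> (0, 0) \<longrightarrow> hom a d z w \<noteq> 0 \<or> hom b d z w \<noteq> 0)"

definition is_crit :: "(sphere \<Rightarrow> sphere) \<Rightarrow> sphere \<Rightarrow> bool" where
  "is_crit g p \<longleftrightarrow> deriv (\<lambda>w. coord (g p) (g (uncoord p w))) (coord p p) = 0"

end

theory Submission
  imports Defs "HOL-Complex_Analysis.Complex_Analysis"
begin


lemma proj_pt_scale: "(k::complex) \<noteq> 0 \<Longrightarrow> proj_pt (k * u) (k * v) = proj_pt u v"
  by (simp add: proj_pt_def)

lemma hom_scale: "hom a d (k*z) (k*w) = k^d * hom a d z w"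
  unfolding hom_def sum_distrib_left
proof (rule sum.cong[OF refl])
  fix j assume "j \<in> {..d}"
  then have "k^d = k^j * k^(d-j)" by (simp flip: power_add)
  then show "a j * (k * z) ^ j * (k * w) ^ (d - j) = k ^ d * (a j * z ^ j * w ^ (d - j))"
    by (simp add: power_mult_distrib algebra_simps)
qed

lemma hom_w0: "hom a d z 0 = a d * z^d"
proof -
  have "hom a d z 0 = (\<Sum>j\<in>{d}. a j * z ^ j * 0 ^ (d - j))"
    unfolding hom_def by (rule sum.mono_neutral_right) auto
  then show ?thesis by simp
qed

lemma rat_map_proj:
  assumes "(z,w) \<noteq> (0,0)"
  shows "rat_map a b d (proj_pt z w) = proj_pt (hom a d z w) (hom b d z w)"
proof (cases "w = 0")
  case True
  then have z: "z \<noteq> 0" using assms by auto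
  have "proj_pt (hom a d z w) (hom b d z w) = proj_pt (z^d * a d) (z^d * b d)"
    using True by (simp add: hom_w0 mult.commute)
  also have "\<dots> = proj_pt (a d) (b d)" using z by (simp add: proj_pt_scale)
  finally show ?thesis using True by (simp add: rat_map_def proj_pt_def)
next
  case False
  have "hom a d z w = w^d * hom a d (z/w) 1" "hom b d z w = w^d * hom b d (z/w) 1"
    using False hom_scale[of _ d w "z/w" 1] by simp_all
  then have "proj_pt (hom a d z w) (hom b d z w) = proj_pt (hom a d (z/w) 1) (hom b d (z/w) 1)"
    using False by (simp add: proj_pt_scale)
  then show ?thesis using False by (simp add: rat_map_def proj_pt_def)
qed

definition plip :: "('a::real_normed_vector \<Rightarrow> 'b::real_normed_vector) \<Rightarrow> 'b \<Rightarrow> bool" where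
  "plip Z z0 \<longleftrightarrow> (\<exists>L. eventually (\<lambda>y. norm (Z y - z0) \<le> L * norm y) (nhds 0))"

lemma plip_const: "plip (\<lambda>y. c) c"
  unfolding plip_def by (rule exI[of _ 0]) simp

lemma plip_add: "plip Z z0 \<Longrightarrow> plip W w0 \<Longrightarrow> plip (\<lambda>y. Z y + W y) (z0 + w0)"
  unfolding plip_def
proof (elim exE)
  fix L1 L2 assume 1: "eventually (\<lambda>y. norm (Z y - z0) \<le> L1 * norm y) (nhds 0)"
    and 2: "eventually (\<lambda>y. norm (W y - w0) \<le> L2 * norm y) (nhds 0)"
  show "\<exists>L. eventually (\<lambda>y. norm (Z y + W y - (z0 + w0)) \<le> L * norm y) (nhds 0)"
    apply (rule exI[of _ "L1+L2"])
    using 1 2 apply eventually_elim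
    by (smt (verit) distrib_right norm_triangle_ineq add_diff_add)
qed

lemma ev_small: "e > 0 \<Longrightarrow> eventually (\<lambda>y::'a::real_normed_vector. norm y < e) (nhds 0)"
  using order_tendstoD(2)[OF tendsto_norm_zero[OF filterlim_ident[of "nhds (0::'a)"]]] by auto

lemma plipE:
  assumes "plip Z z0"
  obtains L where "L \<ge> 0" "eventually (\<lambda>y. norm (Z y - z0) \<le> L * norm y) (nhds 0)"
proof -
  obtain L where L: "eventually (\<lambda>y. norm (Z y - z0) \<le> L * norm y) (nhds 0)"
    using assms unfolding plip_def by blast
  have "eventually (\<lambda>y. norm (Z y - z0) \<le> max L 0 * norm y) (nhds 0)"
    using L by eventually_elim (smt (verit) mult_right_mono norm_ge_zero)
  then show ?thesis using that[of "max L 0"] by simp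
qed

lemma plip_bound:
  assumes "plip Z z0" shows "eventually (\<lambda>y. norm (Z y) \<le> norm z0 + 1) (nhds 0)"
proof -
  obtain L where L0: "L \<ge> 0" and L: "eventually (\<lambda>y. norm (Z y - z0) \<le> L * norm y) (nhds 0)"
    using assms by (rule plipE)
  have "eventually (\<lambda>y. norm y < 1 / (L+1)) (nhds 0)" using L0 by (intro ev_small) auto
  then show ?thesis using L
  proof eventually_elim
    case (elim y)
    have "L * norm y \<le> (L+1) * norm y" by (simp add: distrib_right)
    also have "\<dots> \<le> 1" using elim(1) L0 by (simp add: field_simps)
    finally show ?case using elim(2) norm_triangle_sub[of "Z y" z0] by linarith
  qed
qed

lemma plip_mult:
  fixes Z :: "'a::real_normed_vector \<Rightarrow> 'b::real_normed_algebra"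
  assumes "plip Z z0" "plip W w0" shows "plip (\<lambda>y. Z y * W y) (z0 * w0)"
proof -
  obtain L1 where L1: "L1 \<ge> 0" "eventually (\<lambda>y. norm (Z y - z0) \<le> L1 * norm y) (nhds 0)"
    using assms(1) by (rule plipE)
  obtain L2 where L2: "L2 \<ge> 0" "eventually (\<lambda>y. norm (W y - w0) \<le> L2 * norm y) (nhds 0)"
    using assms(2) by (rule plipE)
  have B: "eventually (\<lambda>y. norm (W y) \<le> norm w0 + 1) (nhds 0)" by (rule plip_bound[OF assms(2)])
  show ?thesis unfolding plip_def
  proof (rule exI[of _ "L1 * (norm w0 + 1) + norm z0 * L2"])
    show "eventually (\<lambda>y. norm (Z y * W y - z0 * w0) \<le> (L1 * (norm w0 + 1) + norm z0 * L2) * norm y) (nhds 0)"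
      using L1(2) L2(2) B
    proof eventually_elim
      case (elim y)
      have "Z y * W y - z0 * w0 = (Z y - z0) * W y + z0 * (W y - w0)" by (simp add: algebra_simps)
      then have "norm (Z y * W y - z0 * w0) \<le> norm (Z y - z0) * norm (W y) + norm z0 * norm (W y - w0)"
        by (metis norm_triangle_le norm_mult_ineq add_mono)
      also have "\<dots> \<le> (L1 * norm y) * (norm w0 + 1) + norm z0 * (L2 * norm y)"
        by (intro add_mono mult_mono elim mult_left_mono) (auto simp: L1)
      finally show ?case by (simp add: algebra_simps)
    qed
  qed
qed

lemma plip_sum:
  fixes Z :: "nat \<Rightarrow> 'a::real_normed_vector \<Rightarrow> 'b::real_normed_vector"
  shows "finite S \<Longrightarrow> (\<And>j. j \<in> S \<Longrightarrow> plip (Z j) (z0 j)) \<Longrightarrow> plip (\<lambda>y. \<Sum>j\<in>S. Z j y) (\<Sum>j\<in>S. z0 j)"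
proof (induction S rule: finite_induct)
  case empty
  then show ?case using plip_const[of 0] by simp
next
  case (insert x F)
  have "plip (\<lambda>y. Z x y + (\<Sum>j\<in>F. Z j y)) (z0 x + (\<Sum>j\<in>F. z0 j))"
    by (rule plip_add) (use insert in auto)
  then show ?case using insert by simp
qed

lemma plip_power:
  fixes Z :: "'a::real_normed_vector \<Rightarrow> 'b::real_normed_algebra_1"
  assumes "plip Z z0" shows "plip (\<lambda>y. Z y ^ n) (z0 ^ n)"
proof (induction n)
  case 0
  then show ?case using plip_const[of 1] by simp
next
  case (Suc n)
  show ?case using plip_mult[OF assms Suc] by simp
qed

lemma plip_hom:
  assumes "\<And>j. j \<le> d \<Longrightarrow> plip (\<lambda>y. a y j) (a0 j)" "plip Z z0" "plip W w0"
  shows "plip (\<lambda>y. hom (a y) d (Z y) (W y)) (hom a0 d z0 w0)"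
proof -
  have "plip (\<lambda>y. \<Sum>j\<in>{..d}. a y j * Z y ^ j * W y ^ (d - j)) (\<Sum>j\<in>{..d}. a0 j * z0 ^ j * w0 ^ (d - j))"
  proof (rule plip_sum)
    fix j assume "j \<in> {..d}"
    then have "plip (\<lambda>y. a y j) (a0 j)" using assms(1) by auto
    moreover have "plip (\<lambda>y. Z y ^ j) (z0 ^ j)" by (rule plip_power[OF assms(2)])
    moreover have "plip (\<lambda>y. W y ^ (d-j)) (w0 ^ (d-j))" by (rule plip_power[OF assms(3)])
    ultimately show "plip (\<lambda>y. a y j * Z y ^ j * W y ^ (d - j)) (a0 j * z0 ^ j * w0 ^ (d - j))"
      by (intro plip_mult)
  qed simp
  then show ?thesis unfolding hom_def .
qed

lemma plip_tendsto:
  assumes "plip Z z0" shows "(Z \<longlongrightarrow> z0) (nhds 0)"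
proof -
  obtain L where L: "L \<ge> 0" "eventually (\<lambda>y. norm (Z y - z0) \<le> L * norm y) (nhds 0)"
    using assms by (rule plipE)
  have "((\<lambda>y. L * norm y) \<longlongrightarrow> L * 0) (nhds 0)"
    by (rule tendsto_mult_left[OF tendsto_norm_zero[OF filterlim_ident]])
  then have "((\<lambda>y. L * norm y) \<longlongrightarrow> 0) (nhds 0)" by simp
  then have "((\<lambda>y. Z y - z0) \<longlongrightarrow> 0) (nhds 0)"
    by (rule Lim_null_comparison[OF L(2)])
  then show ?thesis by (simp add: LIM_zero_iff)
qed

lemma plip_inverse:
  fixes W :: "'a::real_normed_vector \<Rightarrow> complex"
  assumes "plip W w0" "w0 \<noteq> 0" shows "plip (\<lambda>y. inverse (W y)) (inverse w0)"
proof -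
  obtain L where L: "L \<ge> 0" "eventually (\<lambda>y. norm (W y - w0) \<le> L * norm y) (nhds 0)"
    using assms(1) by (rule plipE)
  have "eventually (\<lambda>y. dist (W y) w0 < norm w0 / 2) (nhds 0)"
    using tendstoD[OF plip_tendsto[OF assms(1)], of "norm w0 / 2"] assms(2) by simp
  then have B: "eventually (\<lambda>y. norm (W y) \<ge> norm w0 / 2) (nhds 0)"
  proof eventually_elim
    case (elim y)
    have "norm w0 \<le> norm (W y) + norm (w0 - W y)" by (rule norm_triangle_sub)
    moreover have "norm (w0 - W y) = dist (W y) w0" by (simp add: dist_norm norm_minus_commute)
    ultimately show ?case using elim by linarith
  qed
  show ?thesis unfolding plip_def
  proof (rule exI[of _ "L * 2 / norm w0 ^ 2"])
    show "eventually (\<lambda>y. norm (inverse (W y) - inverse w0) \<le> L * 2 / norm w0 ^ 2 * norm y) (nhds 0)"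
      using L(2) B
    proof eventually_elim
      case (elim y)
      have w0p: "norm w0 > 0" using assms(2) by simp
      have Wy: "W y \<noteq> 0" using elim(2) w0p by (metis half_gt_zero_iff norm_zero order.strict_trans1 less_irrefl)
      have "inverse (W y) - inverse w0 = (w0 - W y) / (W y * w0)"
        using Wy assms(2) by (simp add: field_simps)
      then have "norm (inverse (W y) - inverse w0) = norm (W y - w0) / (norm (W y) * norm w0)"
        by (simp add: norm_mult norm_divide norm_minus_commute)
      also have "\<dots> \<le> (L * norm y) / ((norm w0 / 2) * norm w0)"
      proof (rule frac_le)
        show "0 \<le> L * norm y" using L(1) by simp
        show "norm (W y - w0) \<le> L * norm y" by (rule elim(1))
        show "0 < norm w0 / 2 * norm w0" using w0p by simp
        show "norm w0 / 2 * norm w0 \<le> norm (W y) * norm w0"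
          using elim(2) w0p by (simp add: mult_right_mono)
      qed
      also have "\<dots> = L * 2 / norm w0 ^ 2 * norm y"
        using w0p by (simp add: power2_eq_square field_simps)
      finally show ?case .
    qed
  qed
qed




lemma inv_pt_Some: "inv_pt (Some z) = proj_pt 1 z"
  by (simp add: inv_pt_def proj_pt_def)

definition hrep :: "('a::real_normed_vector \<Rightarrow> sphere) \<Rightarrow> sphere \<Rightarrow> bool" where
  "hrep G p \<longleftrightarrow> (\<exists>Z W z0 w0. (z0,w0) \<noteq> (0,0) \<and> plip Z z0 \<and> plip W w0 \<and> p = proj_pt z0 w0 \<and>
      eventually (\<lambda>y. G y = proj_pt (Z y) (W y)) (nhds 0))"

lemma plip_ev_nz:
  assumes "plip Z z0" "z0 \<noteq> 0" shows "eventually (\<lambda>y. Z y \<noteq> 0) (nhds 0)"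
  using tendsto_imp_eventually_ne[OF plip_tendsto[OF assms(1)] assms(2)] .

lemma hrep_step:
  assumes "hrep G p" "\<forall>j\<le>d. plip (\<lambda>y. a y j) (a0 j)" "\<forall>j\<le>d. plip (\<lambda>y. b y j) (b0 j)"
    "no_common_zero a0 b0 d"
  shows "hrep (\<lambda>y. rat_map (a y) (b y) d (G y)) (rat_map a0 b0 d p)"
proof -
  obtain Z W z0 w0 where nz: "(z0,w0) \<noteq> (0,0)" and pZ: "plip Z z0" and pW: "plip W w0"
    and p: "p = proj_pt z0 w0" and ev: "eventually (\<lambda>y. G y = proj_pt (Z y) (W y)) (nhds 0)"
    using assms(1) unfolding hrep_def by blast
  have evnz: "eventually (\<lambda>y. (Z y, W y) \<noteq> (0,0)) (nhds 0)"
  proof (cases "z0 = 0")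
    case True
    then have "w0 \<noteq> 0" using nz by auto
    then show ?thesis using plip_ev_nz[OF pW] by (auto elim: eventually_mono)
  next
    case False
    then show ?thesis using plip_ev_nz[OF pZ] by (auto elim: eventually_mono)
  qed
  show ?thesis unfolding hrep_def
  proof (intro exI conjI)
    show "(hom a0 d z0 w0, hom b0 d z0 w0) \<noteq> (0, 0)"
      using assms(4) nz unfolding no_common_zero_def by auto
    show "plip (\<lambda>y. hom (a y) d (Z y) (W y)) (hom a0 d z0 w0)"
      using assms(2) pZ pW by (intro plip_hom) auto
    show "plip (\<lambda>y. hom (b y) d (Z y) (W y)) (hom b0 d z0 w0)"
      using assms(3) pZ pW by (intro plip_hom) auto
    show "rat_map a0 b0 d p = proj_pt (hom a0 d z0 w0) (hom b0 d z0 w0)"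
      using p nz by (simp add: rat_map_proj)
    show "eventually (\<lambda>y. rat_map (a y) (b y) d (G y) =
           proj_pt (hom (a y) d (Z y) (W y)) (hom (b y) d (Z y) (W y))) (nhds 0)"
      using ev evnz by eventually_elim (simp add: rat_map_proj)
  qed
qed

lemma hrep_Some:
  assumes "hrep G (Some a)"
  shows "\<exists>C s. C \<ge> 0 \<and> s > 0 \<and> (\<forall>y. norm y < s \<longrightarrow> (\<exists>b. G y = Some b \<and> norm (b - a) \<le> C * norm y))"
proof -
  obtain Z W z0 w0 where pZ: "plip Z z0" and pW: "plip W w0"
    and p: "Some a = proj_pt z0 w0" and ev: "eventually (\<lambda>y. G y = proj_pt (Z y) (W y)) (nhds 0)"
    using assms(1) unfolding hrep_def by blast
  have w0: "w0 \<noteq> 0" and a: "a = z0 / w0" using p by (auto simp: proj_pt_def split: if_splits)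
  have "plip (\<lambda>y. Z y * inverse (W y)) (z0 * inverse w0)"
    by (rule plip_mult[OF pZ plip_inverse[OF pW w0]])
  then obtain C where C: "C \<ge> 0" "eventually (\<lambda>y. norm (Z y * inverse (W y) - z0 * inverse w0) \<le> C * norm y) (nhds 0)"
    by (rule plipE)
  have "eventually (\<lambda>y. \<exists>b. G y = Some b \<and> norm (b - a) \<le> C * norm y) (nhds 0)"
    using C(2) ev plip_ev_nz[OF pW w0]
  proof eventually_elim
    case (elim y)
    have "G y = Some (Z y / W y)" using elim by (simp add: proj_pt_def)
    moreover have "Z y / W y - a = Z y * inverse (W y) - z0 * inverse w0"
      by (simp add: a divide_inverse)
    ultimately show ?case using elim(1) by auto
  qed
  then obtain s where "s > 0" "\<forall>y. dist y 0 < s \<longrightarrow> (\<exists>b. G y = Some b \<and> norm (b - a) \<le> C * norm y)"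
    unfolding eventually_nhds_metric by blast
  then show ?thesis using C(1) by (intro exI[of _ C] exI[of _ s]) auto
qed

lemma holo_plip:
  assumes "holo_on h S" "0 \<in> S" shows "plip h (h 0)"
proof -
  obtain D where D: "(h has_derivative D) (at 0)" using assms unfolding holo_on_def by blast
  then have bl: "bounded_linear D" and lim: "((\<lambda>y. norm ((h y - h 0) - D (y - 0)) / norm (y - 0)) \<longlongrightarrow> 0) (at 0)"
    unfolding has_derivative_iff_norm by auto
  obtain K where K: "K > 0" "\<And>x. norm (D x) \<le> norm x * K"
    using bounded_linear.pos_bounded[OF bl] by blast
  have "eventually (\<lambda>y. norm ((h y - h 0) - D (y - 0)) / norm (y - 0) < 1) (at 0)"
    using order_tendstoD(2)[OF lim] by simp
  then have "eventually (\<lambda>y. y \<noteq> 0 \<longrightarrow> y \<in> UNIV \<longrightarrow> norm ((h y - h 0) - D (y - 0)) / norm (y - 0) < 1) (nhds 0)"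
    unfolding eventually_at_filter .
  then have "eventually (\<lambda>y. norm (h y - h 0) \<le> (1 + K) * norm y) (nhds 0)"
  proof eventually_elim
    case (elim y)
    show ?case
    proof (cases "y = 0")
      case True then show ?thesis by simp
    next
      case False
      then have "norm ((h y - h 0) - D y) < norm y" using elim by (simp add: divide_less_eq)
      moreover have "norm (h y - h 0) \<le> norm ((h y - h 0) - D y) + norm (D y)"
        by (metis norm_triangle_sub add.commute)
      moreover have "norm (D y) \<le> norm y * K" by (rule K(2))
      ultimately show ?thesis by (simp add: algebra_simps)
    qed
  qed
  then show ?thesis unfolding plip_def by blast
qed

lemma holo_sphere_hrep:
  assumes "holo_sphere c S" "0 \<in> S" shows "hrep c (c 0)"
proof -
  obtain e h where e: "e > 0" and hh: "holo_on h (ball 0 e)"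
    and cases: "(\<forall>y\<in>ball 0 e. c y = Some (h y)) \<or> (\<forall>y\<in>ball 0 e. c y = inv_pt (Some (h y)))"
    using assms unfolding holo_sphere_def by blast
  have ph: "plip h (h 0)" using holo_plip[OF hh] e by simp
  have evb: "\<And>P. (\<forall>y\<in>ball 0 e. P y) \<Longrightarrow> eventually P (nhds 0)"
    unfolding eventually_nhds_metric using e by (auto simp: dist_commute)
  from cases show ?thesis
  proof
    assume H: "\<forall>y\<in>ball 0 e. c y = Some (h y)"
    show ?thesis unfolding hrep_def
    proof (intro exI conjI)
      show "(h 0, 1::complex) \<noteq> (0, 0)" by simp
      show "plip h (h 0)" by (rule ph)
      show "plip (\<lambda>y. 1::complex) 1" by (rule plip_const)
      show "c 0 = proj_pt (h 0) 1" using H e by (simp add: proj_pt_def)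
      show "eventually (\<lambda>y. c y = proj_pt (h y) 1) (nhds 0)"
        using H by (intro evb) (simp add: proj_pt_def)
    qed
  next
    assume H: "\<forall>y\<in>ball 0 e. c y = inv_pt (Some (h y))"
    show ?thesis unfolding hrep_def
    proof (intro exI conjI)
      show "(1::complex, h 0) \<noteq> (0, 0)" by simp
      show "plip h (h 0)" by (rule ph)
      show "plip (\<lambda>y. 1::complex) 1" by (rule plip_const)
      show "c 0 = proj_pt 1 (h 0)" using H e by (simp add: inv_pt_Some)
      show "eventually (\<lambda>y. c y = proj_pt 1 (h y)) (nhds 0)"
        using H by (intro evb) (simp add: inv_pt_Some)
    qed
  qed
qed




lemma hom_diff: "hom a d w z - hom b d w z = hom (\<lambda>j. a j - b j) d w z"
  unfolding hom_def by (simp add: sum_subtractf algebra_simps)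

lemma hom_bound:
  assumes "norm w \<le> 1" shows "norm (hom a d w 1) \<le> (\<Sum>j\<le>d. norm (a j))"
  unfolding hom_def
proof (rule order.trans[OF norm_sum sum_mono])
  fix j assume "j \<in> {..d}"
  have "norm w ^ j \<le> 1" using assms by (simp add: power_le_one)
  then show "norm (a j * w ^ j * 1 ^ (d - j)) \<le> norm (a j)"
    by (simp add: norm_mult norm_power mult_left_le)
qed

lemma quot_bound:
  fixes p1 p0 q1 q0 :: complex
  assumes "norm (p1 - p0) \<le> M * t" "norm (q1 - q0) \<le> M * t" "m > 0" "norm q1 \<ge> m" "norm q0 \<ge> m"
    "norm p0 \<le> 1" "M \<ge> 0" "t \<ge> 0"
  shows "norm (p1 / q1 - p0 / q0) \<le> (M / m + M / m^2) * t"
proof -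
  have q1: "q1 \<noteq> 0" and q0: "q0 \<noteq> 0" using assms(3-5) by auto
  have "p1 / q1 - p0 / q0 = (p1 - p0) / q1 + p0 * (q0 - q1) / (q1 * q0)"
    using q1 q0 by (simp add: field_simps)
  then have "norm (p1 / q1 - p0 / q0) \<le> norm (p1 - p0) / norm q1 + norm p0 * norm (q0 - q1) / (norm q1 * norm q0)"
    by (metis norm_triangle_ineq norm_divide norm_mult)
  also have "norm (p1 - p0) / norm q1 \<le> (M * t) / m"
    using assms by (intro frac_le) auto
  also have "norm p0 * norm (q0 - q1) / (norm q1 * norm q0) \<le> (1 * (M * t)) / (m * m)"
  proof (rule frac_le)
    show "0 \<le> 1 * (M * t)" using assms by simp
    show "norm p0 * norm (q0 - q1) \<le> 1 * (M * t)"
      using assms(2,6) by (intro mult_mono) (auto simp: norm_minus_commute)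
    show "0 < m * m" using assms by simp
    show "m * m \<le> norm q1 * norm q0" using assms by (intro mult_mono) auto
  qed
  finally show ?thesis by (simp add: power2_eq_square field_simps)
qed

lemma lip_near0:
  fixes F :: "complex \<Rightarrow> complex"
  assumes hol: "F holomorphic_on ball 0 r" and r: "r > 0" and dL: "norm (deriv F 0) < L1"
  shows "\<exists>r2>0. r2 < r \<and> (\<forall>w w'. norm w \<le> r2 \<longrightarrow> norm w' \<le> r2 \<longrightarrow> norm (F w - F w') \<le> L1 * norm (w - w'))"
proof -
  have "deriv F holomorphic_on ball 0 r" using hol by (intro holomorphic_deriv) auto
  then have "continuous_on (ball 0 r) (deriv F)" by (rule holomorphic_on_imp_continuous_on)
  then have "isCont (deriv F) 0" using r by (simp add: continuous_on_eq_continuous_at)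
  then have "((\<lambda>w. norm (deriv F w)) \<longlongrightarrow> norm (deriv F 0)) (at 0)"
    by (intro tendsto_norm) (simp add: isCont_def)
  then have "eventually (\<lambda>w. norm (deriv F w) < L1) (at 0)"
    using dL by (rule order_tendstoD(2))
  then obtain r3 where r3: "r3 > 0" "\<And>w. w \<noteq> 0 \<Longrightarrow> dist w 0 < r3 \<Longrightarrow> norm (deriv F w) < L1"
    unfolding eventually_at by auto
  define r2 where "r2 = min r r3 / 2"
  have r2: "r2 > 0" "r2 < r" "r2 < r3" using r r3 by (auto simp: r2_def)
  have bnd: "norm (deriv F z) \<le> L1" if "z \<in> cball 0 r2" for z
  proof (cases "z = 0")
    case True then show ?thesis using dL by simp
  next
    case False
    then show ?thesis using r3(2)[of z] that r2 by (auto simp: dist_norm)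
  qed
  have der: "(F has_field_derivative deriv F z) (at z within cball 0 r2)" if "z \<in> cball 0 r2" for z
    using that r2 by (intro holomorphic_derivI[OF hol]) auto
  show ?thesis
  proof (intro exI conjI allI impI)
    fix w w' :: complex assume "norm w \<le> r2" "norm w' \<le> r2"
    then show "norm (F w - F w') \<le> L1 * norm (w - w')"
      using field_differentiable_bound[OF convex_cball der bnd, of w w'] by auto
  qed (use r2 in auto)
qed




lemma plip_ident: "plip (\<lambda>w. w) 0"
  unfolding plip_def by (rule exI[of _ 1]) simp

lemma plip_poly0: "plip (\<lambda>w. hom a d w 1) (hom a d 0 1)"
  by (rule plip_hom[of d "\<lambda>w j. a j" a "\<lambda>w. w" 0 "\<lambda>w. 1" 1, OF plip_const plip_ident plip_const])

lemma unif_lip: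
  fixes A :: "nat \<Rightarrow> 'a::real_normed_vector \<Rightarrow> complex"
  assumes "\<forall>j\<le>d. plip (A j) (A j 0)"
  shows "\<exists>L\<ge>0. eventually (\<lambda>y. \<forall>j\<in>{..d}. norm (A j y - A j 0) \<le> L * norm y) (nhds 0)"
proof -
  have "\<forall>j\<in>{..d}. \<exists>L. L \<ge> 0 \<and> eventually (\<lambda>y. norm (A j y - A j 0) \<le> L * norm y) (nhds 0)"
    using assms by (metis atMost_iff plipE)
  then obtain LL where LL: "\<And>j. j \<in> {..d} \<Longrightarrow> LL j \<ge> 0 \<and> eventually (\<lambda>y. norm (A j y - A j 0) \<le> LL j * norm y) (nhds 0)"
    by metis
  define L where "L = (\<Sum>j\<le>d. LL j)"
  have LLL: "LL j \<le> L" if "j \<in> {..d}" for j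
    unfolding L_def using LL that by (intro member_le_sum) auto
  have "eventually (\<lambda>y. \<forall>j\<in>{..d}. norm (A j y - A j 0) \<le> LL j * norm y) (nhds 0)"
    using LL by (intro eventually_ball_finite) auto
  then have "eventually (\<lambda>y. \<forall>j\<in>{..d}. norm (A j y - A j 0) \<le> L * norm y) (nhds 0)"
  proof eventually_elim
    case (elim y)
    show ?case
    proof
      fix j assume j: "j \<in> {..d}"
      have "LL j * norm y \<le> L * norm y" using LLL[OF j] by (simp add: mult_right_mono)
      then show "norm (A j y - A j 0) \<le> L * norm y" using elim j by force
    qed
  qed
  moreover have "L \<ge> 0" unfolding L_def using LL by (intro sum_nonneg) auto
  ultimately show ?thesis by blast
qed

lemma poly_diff_bound:
  assumes "\<forall>j\<in>{..d}. norm (A j y - A j 0) \<le> L * norm y" "norm w \<le> 1"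
  shows "norm (hom (\<lambda>j. A j y) d w 1 - hom (\<lambda>j. A j 0) d w 1) \<le> (real (d+1) * L) * norm y"
proof -
  have "norm (hom (\<lambda>j. A j y) d w 1 - hom (\<lambda>j. A j 0) d w 1) \<le> (\<Sum>j\<le>d. norm (A j y - A j 0))"
    unfolding hom_diff by (rule hom_bound[OF assms(2)])
  also have "\<dots> \<le> (\<Sum>j\<le>d. L * norm y)" using assms(1) by (intro sum_mono) auto
  finally show ?thesis by simp
qed

lemma local_est:
  fixes A B :: "nat \<Rightarrow> 'a::real_normed_vector \<Rightarrow> complex"
  assumes pA: "\<forall>j\<le>d. plip (A j) (A j 0)" and pB: "\<forall>j\<le>d. plip (B j) (B j 0)"
    and q0: "hom (\<lambda>j. B j 0) d 0 1 \<noteq> 0" and p0: "hom (\<lambda>j. A j 0) d 0 1 = 0"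
  shows "\<exists>K s0 r1. K \<ge> 0 \<and> s0 > 0 \<and> r1 > 0 \<and> (\<forall>y w. norm y < s0 \<longrightarrow> norm w < r1 \<longrightarrow>
     hom (\<lambda>j. B j y) d w 1 \<noteq> 0 \<and> hom (\<lambda>j. B j 0) d w 1 \<noteq> 0 \<and>
     norm (hom (\<lambda>j. A j y) d w 1 / hom (\<lambda>j. B j y) d w 1 - hom (\<lambda>j. A j 0) d w 1 / hom (\<lambda>j. B j 0) d w 1) \<le> K * norm y)"
proof -
  define q where "q = hom (\<lambda>j. B j 0) d 0 1"
  have qp: "norm q > 0" using q0 by (simp add: q_def)
  obtain LA where LA: "LA \<ge> 0" "eventually (\<lambda>y. \<forall>j\<in>{..d}. norm (A j y - A j 0) \<le> LA * norm y) (nhds 0)"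
    using unif_lip[OF pA] by blast
  obtain LB where LB: "LB \<ge> 0" "eventually (\<lambda>y. \<forall>j\<in>{..d}. norm (B j y - B j 0) \<le> LB * norm y) (nhds 0)"
    using unif_lip[OF pB] by blast
  define M where "M = real (d+1) * (LA + LB)"
  have M0: "M \<ge> 0" using LA LB by (simp add: M_def)
  have "eventually (\<lambda>y. \<forall>j\<in>{..d}. norm (A j y - A j 0) \<le> (LA+LB) * norm y \<and> norm (B j y - B j 0) \<le> (LA+LB) * norm y) (nhds 0)"
    using LA(2) LB(2)
  proof eventually_elim
    case (elim y)
    have "LA * norm y \<le> (LA+LB) * norm y" "LB * norm y \<le> (LA+LB) * norm y"
      using LA LB by (simp_all add: mult_right_mono)
    then show ?case using elim by force
  qed
  then obtain s where s: "s > 0" "\<And>y. dist y 0 < s \<Longrightarrow> \<forall>j\<in>{..d}. norm (A j y - A j 0) \<le> (LA+LB) * norm y \<and> norm (B j y - B j 0) \<le> (LA+LB) * norm y"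
    unfolding eventually_nhds_metric by blast
  have "eventually (\<lambda>w. dist (hom (\<lambda>j. B j 0) d w 1) q < norm q / 4) (nhds 0)"
    using tendstoD[OF plip_tendsto[OF plip_poly0], of "norm q / 4"] qp by (simp add: q_def)
  moreover have "eventually (\<lambda>w. dist (hom (\<lambda>j. A j 0) d w 1) 0 < 1) (nhds 0)"
    using tendstoD[OF plip_tendsto[OF plip_poly0[of "\<lambda>j. A j 0" d]], of 1] p0 by (simp add: dist_norm)
  moreover have "eventually (\<lambda>w::complex. norm w < 1) (nhds 0)" by (rule ev_small) simp
  ultimately have "eventually (\<lambda>w. dist (hom (\<lambda>j. B j 0) d w 1) q < norm q / 4 \<and> dist (hom (\<lambda>j. A j 0) d w 1) 0 < 1 \<and> norm w < 1) (nhds 0)"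
    by eventually_elim auto
  then obtain r1 where r1: "r1 > 0" "\<And>w. dist w 0 < r1 \<Longrightarrow> dist (hom (\<lambda>j. B j 0) d w 1) q < norm q / 4 \<and> dist (hom (\<lambda>j. A j 0) d w 1) 0 < 1 \<and> norm w < 1"
    unfolding eventually_nhds_metric by blast
  define s0 where "s0 = min s (norm q / (4 * (M + 1)))"
  have s0: "s0 > 0" using s qp M0 by (simp add: s0_def)
  define m where "m = norm q / 2"
  show ?thesis
  proof (intro exI conjI allI impI)
    fix y :: 'a and w :: complex assume y: "norm y < s0" and w: "norm w < r1"
    have Hy: "\<forall>j\<in>{..d}. norm (A j y - A j 0) \<le> (LA+LB) * norm y \<and> norm (B j y - B j 0) \<le> (LA+LB) * norm y"
      using s(2)[of y] y by (simp add: s0_def)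
    have Hw: "dist (hom (\<lambda>j. B j 0) d w 1) q < norm q / 4" "norm (hom (\<lambda>j. A j 0) d w 1) < 1" "norm w < 1"
      using r1(2)[of w] w by auto
    have dA: "norm (hom (\<lambda>j. A j y) d w 1 - hom (\<lambda>j. A j 0) d w 1) \<le> M * norm y"
      unfolding M_def using Hy Hw(3) by (intro poly_diff_bound) auto
    have dB: "norm (hom (\<lambda>j. B j y) d w 1 - hom (\<lambda>j. B j 0) d w 1) \<le> M * norm y"
      unfolding M_def using Hy Hw(3) by (intro poly_diff_bound) auto
    have "M * norm y \<le> M * (norm q / (4 * (M + 1)))"
      using y M0 by (intro mult_left_mono) (auto simp: s0_def)
    also have "\<dots> \<le> norm q / 4" using M0 qp by (simp add: field_simps)
    finally have Ms: "M * norm y \<le> norm q / 4" .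
    have t1: "norm q \<le> norm (hom (\<lambda>j. B j 0) d w 1) + norm (q - hom (\<lambda>j. B j 0) d w 1)"
      by (rule norm_triangle_sub)
    have t2: "norm (q - hom (\<lambda>j. B j 0) d w 1) < norm q / 4"
      using Hw(1) by (simp add: dist_norm norm_minus_commute)
    have t3: "norm (hom (\<lambda>j. B j 0) d w 1) \<le> norm (hom (\<lambda>j. B j y) d w 1) + norm (hom (\<lambda>j. B j 0) d w 1 - hom (\<lambda>j. B j y) d w 1)"
      by (rule norm_triangle_sub)
    have t4: "norm (hom (\<lambda>j. B j 0) d w 1 - hom (\<lambda>j. B j y) d w 1) \<le> norm q / 4"
      using dB Ms by (simp add: norm_minus_commute)
    have nq0: "norm (hom (\<lambda>j. B j 0) d w 1) \<ge> m" using t1 t2 qp unfolding m_def by linarith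
    have nq1: "norm (hom (\<lambda>j. B j y) d w 1) \<ge> m" using t1 t2 t3 t4 qp unfolding m_def by linarith
    have mp: "m > 0" using qp by (simp add: m_def)
    show "hom (\<lambda>j. B j y) d w 1 \<noteq> 0" using nq1 mp by auto
    show "hom (\<lambda>j. B j 0) d w 1 \<noteq> 0" using nq0 mp by auto
    show "norm (hom (\<lambda>j. A j y) d w 1 / hom (\<lambda>j. B j y) d w 1 - hom (\<lambda>j. A j 0) d w 1 / hom (\<lambda>j. B j 0) d w 1)
          \<le> (M / m + M / m^2) * norm y"
      using dA dB nq0 nq1 mp Hw(2) M0 by (intro quot_bound) auto
  qed (use s0 r1 M0 qp in \<open>auto simp: m_def\<close>)
qed




lemma geo_lim:
  fixes q :: real assumes "0 \<le> q" "q < 1"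
  shows "(\<lambda>n. (C0 + K * real n) * q ^ n) \<longlonglongrightarrow> 0"
proof -
  have "(\<lambda>n. C0 * q ^ n + K * (of_nat n * q ^ n)) \<longlonglongrightarrow> C0 * 0 + K * 0"
    using assms by (intro tendsto_add tendsto_mult_left LIMSEQ_power_zero powser_times_n_limit_0) auto
  then show ?thesis by (simp add: algebra_simps)
qed

lemma norm_polydisk:
  fixes x :: "complex ^ 'r" assumes "x \<in> polydisk \<delta>"
  shows "norm x \<le> real CARD('r) * \<delta>"
proof -
  have "norm x \<le> (\<Sum>i\<in>UNIV. norm (x $ i))" by (simp add: norm_vec_def L2_set_le_sum)
  also have "\<dots> \<le> (\<Sum>i\<in>(UNIV::'r set). \<delta>)"
    using assms by (intro sum_mono) (auto simp: polydisk_def less_imp_le)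
  finally show ?thesis by simp
qed

theorem lemma4p1:
  fixes A B :: "nat \<Rightarrow> complex ^ 'r \<Rightarrow> complex"
    and d :: nat
    and c :: "complex ^ 'r \<Rightarrow> sphere"
    and \<rho> :: real
  defines "f \<equiv> (\<lambda>x. rat_map (\<lambda>j. A j x) (\<lambda>j. B j x) d)"
  assumes deg: "d \<ge> 2"
    and holA: "\<forall>j\<le>d. holo_on (A j) (polydisk 1)"
    and holB: "\<forall>j\<le>d. holo_on (B j) (polydisk 1)"
    and nondeg: "\<forall>x\<in>polydisk 1. no_common_zero (\<lambda>j. A j x) (\<lambda>j. B j x) d"
    and holc: "holo_sphere c (polydisk 1)"
    and crit: "\<forall>x\<in>polydisk 1. is_crit (f x) (c x)"
    and fix0: "f 0 (Some 0) = Some 0"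
    and parab: "\<exists>m::nat. m > 0 \<and> (deriv (\<lambda>w. coord (Some 0) (f 0 (Some w))) 0) ^ m = 1"
    and attr: "\<forall>\<epsilon>>0. \<exists>N. \<forall>n\<ge>N. \<exists>w. (f 0 ^^ n) (c 0) = Some w \<and> norm w < \<epsilon>"
    and rho: "\<rho> > 1"
  shows "\<exists>\<delta>>0. \<forall>\<epsilon>>0. \<exists>N. \<forall>n\<ge>N. \<forall>x\<in>polydisk \<delta>.
           \<exists>w. (f ((1 / \<rho> ^ n) *\<^sub>R x) ^^ n) (c ((1 / \<rho> ^ n) *\<^sub>R x)) = Some w \<and> norm w < \<epsilon>"
proof -
  define P where "P y w = hom (\<lambda>j. A j y) d w 1" for y w
  define Q where "Q y w = hom (\<lambda>j. B j y) d w 1" for y w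
  have fS: "f y (Some w) = proj_pt (P y w) (Q y w)" for y w
    by (simp add: f_def rat_map_def P_def Q_def)
  have z0: "(0::complex^'r) \<in> polydisk 1" by (simp add: polydisk_def)
  have pA: "\<forall>j\<le>d. plip (A j) (A j 0)"
  proof (intro allI impI)
    fix j assume "j \<le> d"
    then have "holo_on (A j) (polydisk 1)" using holA by simp
    then show "plip (A j) (A j 0)" using z0 by (rule holo_plip)
  qed
  have pB: "\<forall>j\<le>d. plip (B j) (B j 0)"
  proof (intro allI impI)
    fix j assume "j \<le> d"
    then have "holo_on (B j) (polydisk 1)" using holB by simp
    then show "plip (B j) (B j 0)" using z0 by (rule holo_plip)
  qed
  have q0: "Q 0 0 \<noteq> 0" and p0: "P 0 0 = 0"
    using fix0 unfolding fS by (auto simp: proj_pt_def split: if_splits)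
  have "\<exists>K s0 r1. K \<ge> 0 \<and> s0 > 0 \<and> r1 > 0 \<and> (\<forall>y w. norm y < s0 \<longrightarrow> norm w < r1 \<longrightarrow>
     Q y w \<noteq> 0 \<and> Q 0 w \<noteq> 0 \<and> norm (P y w / Q y w - P 0 w / Q 0 w) \<le> K * norm y)"
    unfolding P_def Q_def by (rule local_est[OF pA pB q0[unfolded Q_def] p0[unfolded P_def]])
  then obtain K s0 r1 where K: "K \<ge> 0" "s0 > 0" "r1 > 0"
    and loc0: "\<forall>y w. norm y < s0 \<longrightarrow> norm w < r1 \<longrightarrow> Q y w \<noteq> 0 \<and> Q 0 w \<noteq> 0 \<and>
        norm (P y w / Q y w - P 0 w / Q 0 w) \<le> K * norm y"
    by blast
  have loc: "Q y w \<noteq> 0 \<and> Q 0 w \<noteq> 0 \<and> norm (P y w / Q y w - P 0 w / Q 0 w) \<le> K * norm y"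
    if "norm y < s0" "norm w < r1" for y w
    using loc0 that by blast
  have Q0nz: "Q 0 w \<noteq> 0" if "norm w < r1" for w using loc[of 0 w] K that by simp
  define F0 where "F0 w = P 0 w / Q 0 w" for w
  have hP: "(\<lambda>w. P 0 w) holomorphic_on ball 0 r1"
    unfolding P_def hom_def by (intro holomorphic_intros)
  have hQ: "(\<lambda>w. Q 0 w) holomorphic_on ball 0 r1"
    unfolding Q_def hom_def by (intro holomorphic_intros)
  have hol: "F0 holomorphic_on ball 0 r1"
    unfolding F0_def
  proof (rule holomorphic_on_divide[OF hP hQ])
    fix w :: complex assume "w \<in> ball 0 r1"
    then show "Q 0 w \<noteq> 0" by (intro Q0nz) simp
  qed
  have f0S: "f 0 (Some w) = Some (F0 w)" if "norm w < r1" for w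
    using Q0nz[OF that] by (simp add: fS proj_pt_def F0_def)
  have "deriv (\<lambda>w. coord (Some 0) (f 0 (Some w))) 0 = deriv F0 0"
  proof (rule deriv_cong_ev)
    have "eventually (\<lambda>w::complex. norm w < r1) (nhds 0)" using K by (intro ev_small)
    then show "eventually (\<lambda>w. coord (Some 0) (f 0 (Some w)) = F0 w) (nhds 0)"
      by eventually_elim (simp add: f0S coord_def)
  qed simp
  then obtain m :: nat where "m > 0" "(deriv F0 0) ^ m = 1" using parab by auto
  then have nl: "norm (deriv F0 0) = 1" using power_eq_1_iff by blast
  define L1 where "L1 = (1 + \<rho>) / 2"
  have L1: "1 < L1" "L1 < \<rho>" using rho by (auto simp: L1_def)
  obtain R where R: "R > 0" "R < r1"
    and lip: "\<And>w w'. norm w \<le> R \<Longrightarrow> norm w' \<le> R \<Longrightarrow> norm (F0 w - F0 w') \<le> L1 * norm (w - w')"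
    using lip_near0[OF hol K(3), of L1] nl L1 by auto
  obtain k0 where k0: "\<And>n. n \<ge> k0 \<Longrightarrow> \<exists>w. (f 0 ^^ n) (c 0) = Some w \<and> norm w < R / 2"
    using attr R by (metis half_gt_zero)
  then obtain u where u: "\<And>n. n \<ge> k0 \<Longrightarrow> (f 0 ^^ n) (c 0) = Some (u n) \<and> norm (u n) < R / 2"
    by metis
  have uF: "u (Suc n) = F0 (u n)" if "n \<ge> k0" for n
  proof -
    have "Some (u (Suc n)) = f 0 ((f 0 ^^ n) (c 0))" using u[of "Suc n"] that by simp
    also have "\<dots> = Some (F0 (u n))" using u[OF that] R by (simp add: f0S)
    finally show ?thesis by simp
  qed
  have hr: "hrep (\<lambda>y. (f y ^^ k) (c y)) ((f 0 ^^ k) (c 0))" for k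
  proof (induction k)
    case 0
    then show ?case using holo_sphere_hrep[OF holc z0] by simp
  next
    case (Suc k)
    have "hrep (\<lambda>y. rat_map (\<lambda>j. A j y) (\<lambda>j. B j y) d ((f y ^^ k) (c y)))
                (rat_map (\<lambda>j. A j 0) (\<lambda>j. B j 0) d ((f 0 ^^ k) (c 0)))"
      using Suc pA pB nondeg z0 by (intro hrep_step) auto
    then show ?case by (simp add: f_def)
  qed
  obtain C0 s1 where C0: "C0 \<ge> 0" "s1 > 0"
    and base: "\<And>y. norm y < s1 \<Longrightarrow> \<exists>b. (f y ^^ k0) (c y) = Some b \<and> norm (b - u k0) \<le> C0 * norm y"
    using hrep_Some[of "\<lambda>y. (f y ^^ k0) (c y)" "u k0"] hr[of k0] u[of k0] by auto
  define E where "E t \<sigma> = (C0 + K * real t) * L1 ^ t * \<sigma>" for t \<sigma>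
  have claim: "\<exists>v. (f y ^^ (k0 + t)) (c y) = Some v \<and> norm (v - u (k0 + t)) \<le> E t (norm y)"
    if y: "norm y < min s0 s1" and Et: "E t (norm y) \<le> R / 2" for y t
    using Et
  proof (induction t)
    case 0
    then show ?case using base[of y] y by (simp add: E_def)
  next
    case (Suc t)
    have mono: "E t (norm y) \<le> E (Suc t) (norm y)"
    proof -
      have "K * real t \<le> K * real (Suc t)" using K by (intro mult_left_mono) auto
      moreover have "L1 ^ t \<le> L1 ^ Suc t" using L1 by (intro power_increasing) auto
      ultimately show ?thesis
        unfolding E_def using L1 K C0 by (intro mult_right_mono mult_mono) auto
    qed
    then obtain v where v: "(f y ^^ (k0 + t)) (c y) = Some v" "norm (v - u (k0 + t)) \<le> E t (norm y)"
      using Suc by auto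
    have uk: "norm (u (k0 + t)) < R / 2" using u[of "k0+t"] by simp
    have vR: "norm v \<le> R"
      using v(2) Suc.prems mono uk norm_triangle_sub[of v "u (k0+t)"] by linarith
    have ys0: "norm y < s0" using y by simp
    have lv: "Q y v \<noteq> 0 \<and> Q 0 v \<noteq> 0 \<and> norm (P y v / Q y v - P 0 v / Q 0 v) \<le> K * norm y"
      using loc[OF ys0] vR R by auto
    have step: "(f y ^^ (k0 + Suc t)) (c y) = Some (P y v / Q y v)"
      using v(1) lv by (simp add: fS proj_pt_def)
    have un: "u (k0 + Suc t) = F0 (u (k0 + t))" using uF[of "k0+t"] by simp
    have "norm (P y v / Q y v - F0 (u (k0 + t))) \<le> norm (P y v / Q y v - F0 v) + norm (F0 v - F0 (u (k0+t)))"
      using norm_triangle_ineq[of "P y v / Q y v - F0 v" "F0 v - F0 (u (k0+t))"] by simp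
    also have "\<dots> \<le> K * norm y + L1 * norm (v - u (k0+t))"
    proof (rule add_mono)
      show "norm (P y v / Q y v - F0 v) \<le> K * norm y" using lv by (simp add: F0_def)
      have "norm (u (k0 + t)) \<le> R" using uk R by simp
      then show "norm (F0 v - F0 (u (k0+t))) \<le> L1 * norm (v - u (k0+t))" by (rule lip[OF vR])
    qed
    also have "\<dots> \<le> K * norm y + L1 * E t (norm y)"
    proof -
      have "L1 * norm (v - u (k0+t)) \<le> L1 * E t (norm y)" using v(2) L1 by (intro mult_left_mono) auto
      then show ?thesis by linarith
    qed
    also have "\<dots> \<le> E (Suc t) (norm y)"
    proof -
      have h1: "1 \<le> L1 ^ Suc t" using L1 by (intro one_le_power) auto
      have "K * norm y * 1 \<le> K * norm y * L1 ^ Suc t"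
        by (rule mult_left_mono[OF h1]) (simp add: K)
      then have "K * norm y \<le> K * L1 ^ Suc t * norm y" by (simp add: mult_ac)
      then show ?thesis unfolding E_def by (simp add: algebra_simps)
    qed
    finally show ?case using step un by simp
  qed
  define g where "g n = (C0 + K * real n) * (L1 / \<rho>) ^ n" for n
  have q1: "0 \<le> L1 / \<rho>" using L1 rho by simp
  have q2: "L1 / \<rho> < 1" using L1 rho by simp
  have glim: "g \<longlonglongrightarrow> 0" unfolding g_def by (rule geo_lim[OF q1 q2])
  have "Bseq g" by (rule convergent_imp_Bseq[OF convergentI[OF glim]])
  then obtain Bd where Bd0: "0 < Bd" "\<forall>n. norm (g n) \<le> Bd" by (rule BseqE)
  have Bd: "Bd > 0" "norm (g n) \<le> Bd" for n using Bd0 by auto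
  define Cr where "Cr = real CARD('r)"
  have Cr: "Cr > 0" by (simp add: Cr_def)
  define \<delta> where "\<delta> = min (min s0 s1) (R / (4 * Bd)) / (2 * Cr)"
  have \<delta>: "\<delta> > 0" using K C0 R Bd Cr by (simp add: \<delta>_def)
  have Crd: "Cr * \<delta> \<le> min s0 s1 / 2" "Cr * \<delta> \<le> R / (4 * Bd) / 2"
    using Cr by (auto simp: \<delta>_def)
  have Crd0: "Cr * \<delta> > 0" using Cr \<delta> by simp
  have nx: "norm x \<le> Cr * \<delta>" if "x \<in> polydisk \<delta>" for x :: "complex ^ 'r"
    using norm_polydisk[OF that] by (simp add: Cr_def)
  show ?thesis
  proof (intro exI[of _ \<delta>] conjI allI impI)
    show "\<delta> > 0" by (rule \<delta>)
    fix \<epsilon> :: real assume e: "\<epsilon> > 0"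
    obtain N1 where N1: "\<And>n. n \<ge> N1 \<Longrightarrow> \<exists>w. (f 0 ^^ n) (c 0) = Some w \<and> norm w < \<epsilon> / 2"
      using attr e by (metis half_gt_zero)
    obtain N2 where N2: "\<And>n. n \<ge> N2 \<Longrightarrow> norm (g n - 0) < \<epsilon> / 2 / (Cr * \<delta>)"
      using LIMSEQ_D[OF glim, of "\<epsilon> / 2 / (Cr * \<delta>)"] e Crd0 by auto
    show "\<exists>N. \<forall>n\<ge>N. \<forall>x\<in>polydisk \<delta>.
           \<exists>w. (f ((1 / \<rho> ^ n) *\<^sub>R x) ^^ n) (c ((1 / \<rho> ^ n) *\<^sub>R x)) = Some w \<and> norm w < \<epsilon>"
    proof (intro exI[of _ "max (max k0 N1) N2"] allI impI ballI)
      fix n :: nat and x :: "complex ^ 'r" assume n: "max (max k0 N1) N2 \<le> n" and x: "x \<in> polydisk \<delta>"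
      define y where "y = (1 / \<rho> ^ n) *\<^sub>R x"
      define t where "t = n - k0"
      have nt: "n = k0 + t" using n by (simp add: t_def)
      have rn: "\<rho> ^ n \<ge> 1" using rho by (intro one_le_power) auto
      have ny: "norm y = norm x / \<rho> ^ n" using rho by (simp add: y_def)
      have "norm x * 1 \<le> norm x * \<rho> ^ n" using rn by (intro mult_left_mono) auto
      then have nyx: "norm y \<le> norm x" unfolding ny using rn by (simp add: divide_le_eq)
      have nxb: "norm x \<le> Cr * \<delta>" using norm_polydisk[OF x] by (simp add: Cr_def)
      have ys: "norm y < min s0 s1" using nyx nxb Crd(1) K C0 by auto
      have g0: "g n \<ge> 0" unfolding g_def using K C0 L1 rho by auto
      have "E t (norm y) = (C0 + K * real t) * L1 ^ t * norm x / \<rho> ^ n" by (simp add: E_def ny)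
      also have "\<dots> \<le> (C0 + K * real n) * L1 ^ n * norm x / \<rho> ^ n"
      proof -
        have "K * real t \<le> K * real n" using K by (intro mult_left_mono) (auto simp: t_def)
        moreover have "L1 ^ t \<le> L1 ^ n" using L1 by (intro power_increasing) (auto simp: t_def)
        ultimately have "(C0 + K * real t) * L1 ^ t \<le> (C0 + K * real n) * L1 ^ n"
          using L1 K C0 by (intro mult_mono) auto
        then show ?thesis using rho by (intro divide_right_mono mult_right_mono) auto
      qed
      also have "\<dots> = g n * norm x" by (simp add: g_def power_divide)
      finally have Eg: "E t (norm y) \<le> g n * norm x" .
      have "g n * norm x \<le> Bd * (Cr * \<delta>)"
        using Bd(2)[of n] g0 nxb by (intro mult_mono) auto
      also have "\<dots> \<le> Bd * (R / (4 * Bd) / 2)" using Crd(2) Bd by (intro mult_left_mono) auto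
      also have "\<dots> \<le> R / 2" using Bd R by (simp add: field_simps)
      finally have ER: "E t (norm y) \<le> R / 2" using Eg by linarith
      obtain v where v: "(f y ^^ (k0 + t)) (c y) = Some v" "norm (v - u (k0 + t)) \<le> E t (norm y)"
        using claim[OF ys ER] by blast
      have gN: "g n < \<epsilon> / 2 / (Cr * \<delta>)" using N2[of n] n g0 by simp
      have "g n * norm x \<le> g n * (Cr * \<delta>)" by (rule mult_left_mono[OF nxb g0])
      also have "\<dots> < \<epsilon> / 2 / (Cr * \<delta>) * (Cr * \<delta>)" by (rule mult_strict_right_mono[OF gN Crd0])
      also have "\<dots> = \<epsilon> / 2" using Cr \<delta> by (simp add: field_simps)
      finally have Ee: "E t (norm y) < \<epsilon> / 2" using Eg by linarith
      have nk: "n \<ge> k0" "n \<ge> N1" using n by auto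
      obtain w where w: "(f 0 ^^ n) (c 0) = Some w" "norm w < \<epsilon> / 2" using N1[OF nk(2)] by blast
      have "Some w = Some (u n)" using w(1) u[OF nk(1)] by simp
      then have wu: "w = u n" by simp
      have un: "u (k0 + t) = u n" using nt by simp
      have "norm v \<le> norm (u n) + norm (v - u n)" by (rule norm_triangle_sub)
      moreover have "norm (v - u n) \<le> E t (norm y)" using v(2) un by simp
      moreover have "norm (u n) < \<epsilon> / 2" using w(2) wu by simp
      ultimately have "norm v < \<epsilon>" using Ee by linarith
      moreover have "(f y ^^ n) (c y) = Some v" using v(1) nt by simp
      ultimately show "\<exists>w. (f ((1 / \<rho> ^ n) *\<^sub>R x) ^^ n) (c ((1 / \<rho> ^ n) *\<^sub>R x)) = Some w \<and> norm w < \<epsilon>"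
        unfolding y_def by blast
    qed
  qed
qed

end
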